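(* Let $k\ge1$ and $m\ge1$ be integers. Consider all $k$-Dyck paths with exactly $m+1$ up-steps. For each such path, let $r(P)$ be the number of down-steps in the maximal run of down-steps immediately following its first up-step (so $0\le r(P)\le k$). Then $$\sum_{P} r(P)=\frac{k}{m+1}\binom{(k+1)m}{m}.$$
   Context: A $k$-Dyck path is a lattice path from $(0,0)$ to a point on the $x$-axis using up-steps $(1,k)$ and down-steps $(1,-1)$ that never goes below the $x$-axis. *)

theory Defs
  imports Complex_Main
begin

text \<open>A lattice path is encoded as a list of steps: True = up-step (1,k),
  False = down-step (1,-1).\<close>

definition step_height :: "nat \<Rightarrow> bool \<Rightarrow> int" where
  "step_height k s = (if s then int k else -1)"

definition path_height :: "nat \<Rightarrow> bool list \<Rightarrow> int" where
  "path_height k P = sum_list (map (step_height k) P)"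

definition is_kDyck :: "nat \<Rightarrow> bool list \<Rightarrow> bool" where
  "is_kDyck k P \<longleftrightarrow> (\<forall>i \<le> length P. path_height k (take i P) \<ge> 0) \<and> path_height k P = 0"

definition num_up :: "bool list \<Rightarrow> nat" where
  "num_up P = length (filter (\<lambda>s. s) P)"

definition first_run :: "bool list \<Rightarrow> nat" where
  "first_run P = length (takeWhile (\<lambda>s. \<not> s) (tl (dropWhile (\<lambda>s. \<not> s) P)))"

end

theory Submission
  imports Defs
begin


lemma binom_shift: "(Suc j) * (x choose Suc j) = (x - j) * (x choose j)"
  using times_binomial_minus1_eq[of "Suc j" x] binomial_absorb_comp[of x j] by simp

function NN :: "nat \<Rightarrow> nat \<Rightarrow> nat \<Rightarrow> nat" where
  "NN k a n = (if a = 0 \<and> n = 0 then 1 else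
     (if n > 0 then NN k (a + k) (n - 1) else 0) + (if a > 0 then NN k (a - 1) n else 0))"
  by pat_completeness auto
termination
proof (relation "measure (\<lambda>(k,a,n). a + (k+1)*n)")
  fix k a n :: nat assume "\<not> (a = 0 \<and> n = 0)" "0 < n"
  then obtain n' where "n = Suc n'" by (cases n) auto
  then show "((k, a + k, n - 1), k, a, n) \<in> measure (\<lambda>(k, a, n). a + (k + 1) * n)" by simp
qed auto

declare NN.simps[simp del]

fun valid :: "nat \<Rightarrow> int \<Rightarrow> bool list \<Rightarrow> bool" where
  "valid k h [] = (h = 0)"
| "valid k h (s # P) = (if s then valid k (h + int k) P else h \<ge> 1 \<and> valid k (h - 1) P)"

lemma ph_Nil[simp]: "path_height k [] = 0" by (simp add: path_height_def)
lemma ph_Cons[simp]: "path_height k (s # P) = step_height k s + path_height k P"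
  by (simp add: path_height_def)

lemma all_le_Suc: "(\<forall>i\<le>Suc n. Q i) \<longleftrightarrow> Q 0 \<and> (\<forall>i\<le>n. Q (Suc i))"
  by (metis Suc_le_mono le0 not0_implies_Suc)

lemma valid_iff: "h \<ge> 0 \<Longrightarrow> valid k h P \<longleftrightarrow>
   (\<forall>i\<le>length P. h + path_height k (take i P) \<ge> 0) \<and> h + path_height k P = 0"
proof (induction P arbitrary: h)
  case Nil then show ?case by auto
next
  case (Cons s P)
  show ?case
  proof (cases s)
    case True
    have "valid k (h + int k) P \<longleftrightarrow>
      (\<forall>i\<le>length P. (h + int k) + path_height k (take i P) \<ge> 0) \<and> (h + int k) + path_height k P = 0"
      using Cons by simp
    then show ?thesis using True Cons.prems
      by (simp only: length_Cons all_le_Suc) (simp add: step_height_def algebra_simps)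
  next
    case False
    show ?thesis
    proof (cases "h \<ge> 1")
      case True
      have "valid k (h - 1) P \<longleftrightarrow>
        (\<forall>i\<le>length P. (h - 1) + path_height k (take i P) \<ge> 0) \<and> (h - 1) + path_height k P = 0"
        using Cons True by simp
      then show ?thesis using True False Cons.prems
        by (simp only: length_Cons all_le_Suc) (simp add: step_height_def algebra_simps)
    next
      case hf: False
      then have "h = 0" using Cons.prems by simp
      then show ?thesis using False
        apply (simp only: length_Cons all_le_Suc)
        apply (simp add: step_height_def)
        apply (rule disjI1, rule exI[of _ 0])
        by simp
    qed
  qed
qed

lemma num_up_Nil[simp]: "num_up [] = 0" by (simp add: num_up_def)
lemma num_up_Cons[simp]: "num_up (s # P) = (if s then Suc (num_up P) else num_up P)"
  by (simp add: num_up_def)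

lemma valid_length: "valid k h P \<Longrightarrow> int (length P) = h + int (k+1) * int (num_up P)"
  by (induction P arbitrary: h) (auto split: if_splits simp: algebra_simps)

definition SS :: "nat \<Rightarrow> nat \<Rightarrow> nat \<Rightarrow> bool list set" where
  "SS k a n = {P. valid k (int a) P \<and> num_up P = n}"

lemma SS_finite: "finite (SS k a n)"
proof -
  have "SS k a n \<subseteq> {xs. set xs \<subseteq> UNIV \<and> length xs = a + (k+1)*n}"
  proof
    fix P assume "P \<in> SS k a n"
    then have "int (length P) = int a + int (k+1) * int n" using valid_length unfolding SS_def by auto
    then have "length P = a + (k+1)*n" by (metis of_nat_add of_nat_mult of_nat_eq_iff)
    then show "P \<in> {xs. set xs \<subseteq> UNIV \<and> length xs = a + (k+1)*n}" by simp
  qed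
  moreover have "finite {xs. set xs \<subseteq> (UNIV::bool set) \<and> length xs = a + (k+1)*n}"
    by (rule finite_lists_length_eq) simp
  ultimately show ?thesis by (rule finite_subset)
qed

lemma SS_dec: "SS k a n = (if n > 0 then (#) True ` SS k (a+k) (n-1) else {})
   \<union> (if a > 0 then (#) False ` SS k (a-1) n else {}) \<union> (if a = 0 \<and> n = 0 then {[]} else {})"
proof (intro set_eqI iffI)
  fix P assume "P \<in> SS k a n"
  then show "P \<in> (if n > 0 then (#) True ` SS k (a+k) (n-1) else {})
   \<union> (if a > 0 then (#) False ` SS k (a-1) n else {}) \<union> (if a = 0 \<and> n = 0 then {[]} else {})"
    unfolding SS_def
    by (cases P) (auto split: if_splits simp: of_nat_diff)
next
  fix P assume "P \<in> (if n > 0 then (#) True ` SS k (a+k) (n-1) else {})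
   \<union> (if a > 0 then (#) False ` SS k (a-1) n else {}) \<union> (if a = 0 \<and> n = 0 then {[]} else {})"
  then show "P \<in> SS k a n"
    unfolding SS_def by (auto split: if_splits simp: of_nat_diff)
qed

lemma card_SS: "card (SS k a n) = NN k a n"
proof (induction k a n rule: NN.induct)
  case (1 k a n)
  have c: "card (A \<union> B \<union> C) = card A + card B + card C" if "finite A" "finite B" "finite C"
     "A \<inter> B = {}" "A \<inter> C = {}" "B \<inter> C = {}" for A B C :: "bool list set"
    using that by (simp add: card_Un_disjoint Int_Un_distrib2)
  have "card (SS k a n) = card (if n > 0 then (#) True ` SS k (a+k) (n-1) else {})
   + card (if a > 0 then (#) False ` SS k (a-1) n else {}) + card (if a = 0 \<and> n = 0 then {[]} else ({}::bool list set))"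
    by (subst SS_dec, rule c) (auto simp: SS_finite)
  also have "\<dots> = NN k a n"
  proof -
    have "card (if 0 < n then (#) True ` SS k (a + k) (n - 1) else {}) = (if n > 0 then NN k (a + k) (n - 1) else 0)"
      using 1 by (auto simp: card_image)
    moreover have "card (if 0 < a then (#) False ` SS k (a - 1) n else {}) = (if a > 0 then NN k (a - 1) n else 0)"
      using 1 by (auto simp: card_image)
    ultimately show ?thesis unfolding NN.simps[of k a n] by auto
  qed
  finally show ?case .
qed



lemma key_choose: "(k * Suc n' + n') choose (Suc n') = k * ((k * Suc n' + n') choose n')"
proof -
  have "Suc n' * ((k * Suc n' + n') choose (Suc n')) = (k * Suc n') * ((k * Suc n' + n') choose n')"
    using binom_shift[of n' "k * Suc n' + n'"] by simp
  then show ?thesis by (metis mult.assoc mult.commute mult_left_cancel nat.distinct(1))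
qed

lemma NN_closed: "int (NN k a n) = int ((a + (k+1)*n) choose n)
   - int k * (if n = 0 then 0 else int ((a + (k+1)*n) choose (n-1)))"
proof (induction k a n rule: NN.induct)
  case (1 k a n)
  show ?case
  proof (cases n)
    case 0
    show ?thesis
    proof (cases a)
      case 0 then show ?thesis using \<open>n = 0\<close> by (simp add: NN.simps)
    next
      case (Suc a') then show ?thesis using \<open>n = 0\<close> 1(2) NN.simps[of k a 0] by simp
    qed
  next
    case (Suc n')
    define x where "x = a + k + (k+1)*n'"
    have IH1: "int (NN k (a+k) n') = int (x choose n') - int k * (if n' = 0 then 0 else int (x choose (n'-1)))"
      using 1(1) Suc unfolding x_def by simp
    show ?thesis
    proof (cases a)
      case 0
      have NNe: "NN k a n = NN k (a+k) n'" using 0 Suc NN.simps[of k a n] by simp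
      have xe: "a + (k+1)*n = Suc x" using Suc 0 unfolding x_def by simp
      have x2: "x = k * Suc n' + n'" using 0 unfolding x_def by (simp add: algebra_simps)
      have kc: "x choose Suc n' = k * (x choose n')" using key_choose x2 by simp
      show ?thesis
      proof (cases n')
        case 0
        then show ?thesis using NNe IH1 xe kc Suc by simp
      next
        case (Suc n'')
        have "Suc x choose Suc n' = (x choose n') + (x choose Suc n')" by simp
        moreover have "Suc x choose n' = (x choose n'') + (x choose n')" using Suc by simp
        ultimately show ?thesis using NNe IH1 xe kc Suc \<open>n = Suc n'\<close>
          by (simp add: algebra_simps)
      qed
    next
      case (Suc a')
      have NNe: "NN k a n = NN k (a+k) n' + NN k (a-1) n" using Suc \<open>n = Suc n'\<close> NN.simps[of k a n] by simp
      have xe: "a + (k+1)*n = Suc x" using Suc \<open>n = Suc n'\<close> unfolding x_def by simp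
      have xe2: "a - 1 + (k+1)*n = x" using Suc \<open>n = Suc n'\<close> unfolding x_def by simp
      have "int (NN k (a-1) n) = int ((a - 1 + (k+1)*n) choose n) - int k * (if n = 0 then 0 else int ((a - 1 + (k+1)*n) choose (n-1)))"
        using 1(2) Suc by simp
      then have IH2: "int (NN k (a-1) n) = int (x choose Suc n') - int k * int (x choose n')"
        unfolding xe2 using \<open>n = Suc n'\<close> by simp
      show ?thesis
      proof (cases n')
        case 0
        then show ?thesis using NNe IH1 IH2 xe \<open>n = Suc n'\<close> by simp
      next
        case (Suc n'')
        have "Suc x choose Suc n' = (x choose n') + (x choose Suc n')" by simp
        moreover have "Suc x choose n' = (x choose n'') + (x choose n')" using Suc by simp
        ultimately show ?thesis using NNe IH1 IH2 xe Suc \<open>n = Suc n'\<close>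
          by (simp add: algebra_simps)
      qed
    qed
  qed
qed



lemma runsum: "m \<ge> 1 \<Longrightarrow> (\<Sum>Q\<in>SS k a m. length (takeWhile (\<lambda>s. \<not> s) Q)) = (\<Sum>b<a. NN k b m)"
proof (induction a)
  case 0
  have "SS k 0 m = (#) True ` SS k k (m-1)" using 0 by (subst SS_dec) simp
  then show ?case by (simp add: sum.reindex)
next
  case (Suc b)
  have e: "SS k (Suc b) m = (#) True ` SS k (Suc b + k) (m-1) \<union> (#) False ` SS k b m"
    using Suc.prems by (subst SS_dec) simp
  have "(\<Sum>Q\<in>SS k (Suc b) m. length (takeWhile (\<lambda>s. \<not> s) Q))
     = (\<Sum>Q\<in>(#) True ` SS k (Suc b + k) (m-1). length (takeWhile (\<lambda>s. \<not> s) Q))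
     + (\<Sum>Q\<in>(#) False ` SS k b m. length (takeWhile (\<lambda>s. \<not> s) Q))"
    unfolding e by (rule sum.union_disjoint) (auto simp: SS_finite)
  also have "\<dots> = (\<Sum>Q\<in>SS k b m. Suc (length (takeWhile (\<lambda>s. \<not> s) Q)))"
    by (simp add: sum.reindex)
  also have "\<dots> = card (SS k b m) + (\<Sum>Q\<in>SS k b m. length (takeWhile (\<lambda>s. \<not> s) Q))"
  proof -
    have "(\<Sum>Q\<in>SS k b m. Suc (length (takeWhile (\<lambda>s. \<not> s) Q))) = (\<Sum>Q\<in>SS k b m. 1 + length (takeWhile (\<lambda>s. \<not> s) Q))"
      by simp
    also have "\<dots> = (\<Sum>Q\<in>SS k b m. 1) + (\<Sum>Q\<in>SS k b m. length (takeWhile (\<lambda>s. \<not> s) Q))"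
      by (rule sum.distrib)
    finally show ?thesis by simp
  qed
  also have "\<dots> = (\<Sum>b<Suc b. NN k b m)" using Suc by (simp add: card_SS)
  finally show ?case .
qed

lemma hockey: "(\<Sum>b<t. (L + b) choose j) + (L choose Suc j) = (L + t) choose Suc j"
  by (induction t) (simp_all add: algebra_simps)

lemma kDyck_valid: "is_kDyck k P \<longleftrightarrow> valid k 0 P"
  using valid_iff[of 0 k P] unfolding is_kDyck_def by simp

theorem mainTheorem6:
  fixes k m :: nat
  assumes "k \<ge> 1" and "m \<ge> 1"
  shows "real (\<Sum>P \<in> {P. is_kDyck k P \<and> num_up P = m + 1}. first_run P)
           = real k / real (m + 1) * real (((k + 1) * m) choose m)"
proof -
  define L where "L = (k+1)*m"
  obtain m' where m': "m = Suc m'" using assms(2) by (cases m) auto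
  have set_eq: "{P. is_kDyck k P \<and> num_up P = m + 1} = (#) True ` SS k k m"
    by (subst SS_dec[of k 0 "m+1", simplified, symmetric]) (simp add: SS_def kDyck_valid)
  have fr: "first_run (True # Q) = length (takeWhile (\<lambda>s. \<not> s) Q)" for Q
    by (simp add: first_run_def)
  have s1: "(\<Sum>P \<in> {P. is_kDyck k P \<and> num_up P = m + 1}. first_run P) = (\<Sum>b<k. NN k b m)"
    unfolding set_eq using runsum[OF assms(2), of k k] by (simp add: sum.reindex fr)
  have s2: "int (\<Sum>b<k. NN k b m) = (\<Sum>b<k. int ((L + b) choose m)) - int k * (\<Sum>b<k. int ((L + b) choose m'))"
  proof -
    have "int (\<Sum>b<k. NN k b m) = (\<Sum>b<k. int (NN k b m))" by (rule of_nat_sum)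
    also have "\<dots> = (\<Sum>b<k. int ((L + b) choose m) - int k * int ((L + b) choose m'))"
    proof (rule sum.cong)
      fix b assume "b \<in> {..<k}"
      have "b + (k+1)*m = L + b" unfolding L_def by simp
      then show "int (NN k b m) = int ((L + b) choose m) - int k * int ((L + b) choose m')"
        using NN_closed[of k b m] m' by (simp add: add.commute)
    qed simp
    also have "\<dots> = (\<Sum>b<k. int ((L + b) choose m)) - (\<Sum>b<k. int k * int ((L + b) choose m'))"
      by (rule sum_subtractf)
    also have "\<dots> = (\<Sum>b<k. int ((L + b) choose m)) - int k * (\<Sum>b<k. int ((L + b) choose m'))"
      by (simp only: sum_distrib_left)
    finally show ?thesis .
  qed
  have h1: "(\<Sum>b<k. int ((L + b) choose m)) = int ((L + k) choose Suc m) - int (L choose Suc m)"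
  proof -
    have "int (\<Sum>b<k. (L + b) choose m) + int (L choose Suc m) = int ((L + k) choose Suc m)"
      using hockey[where t=k and L=L and j=m]  by (simp only: of_nat_add[symmetric])
    then show ?thesis by (simp add: of_nat_sum)
  qed
  have h2: "(\<Sum>b<k. int ((L + b) choose m')) = int ((L + k) choose m) - int (L choose m)"
  proof -
    have "int (\<Sum>b<k. (L + b) choose m') + int (L choose m) = int ((L + k) choose m)"
      using hockey[where t=k and L=L and j=m'] unfolding m' by (simp only: of_nat_add[symmetric])
    then show ?thesis by (simp add: of_nat_sum)
  qed
  have c1: "(L + k) choose Suc m = k * ((L + k) choose m)"
    using key_choose[of k m] unfolding L_def by (simp add: algebra_simps)
  have c2: "Suc m * (L choose Suc m) = (k * m) * (L choose m)"
  proof -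
    have "L - m = k * m" unfolding L_def by simp
    then show ?thesis using binom_shift[of m L] by simp
  qed
  define T where "T = int (\<Sum>b<k. NN k b m)"
  have T: "T = int k * int (L choose m) - int (L choose Suc m)"
    unfolding T_def s2 h1 h2 c1 by (simp add: algebra_simps)
  have "int (Suc m) * T = int k * int (L choose m)"
  proof -
    have "int (Suc m) * int (L choose Suc m) = int k * int m * int (L choose m)"
      using c2 by (metis of_nat_mult)
    then show ?thesis unfolding T by (simp add: algebra_simps)
  qed
  then have "real (Suc m) * real_of_int T = real k * real (L choose m)"
    by (metis of_int_mult of_int_of_nat_eq)
  then have "real_of_int T = real k / real (m+1) * real (L choose m)"
    by (simp add: field_simps)
  moreover have "real_of_int T = real (\<Sum>P \<in> {P. is_kDyck k P \<and> num_up P = m + 1}. first_run P)"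
    unfolding T_def s1 by simp
  ultimately show ?thesis unfolding L_def by simp
qed

end
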